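(* Let $a$ be a non-degenerate arrow environment and let $(X_t)$ be the walk on $a$ started at $0$. Let $Z^+$ and $Z^-$ be the processes on $a$ with initial values $Z^+_0=Z^-_0=1$. Then $T_{-1}<\infty$ if and only if $Z^+_n=0$ for some $n$, and $T_1<\infty$ if and only if $Z^-_n=0$ for some $n$.
   Context: Notation: $\mathbb N=\{1,2,\dots\}$, $\mathbb Z_+=\{0,1,2,\dots\}$. An arrow environment is $a\in\{0,1\}^{\mathbb Z\times\mathbb N}$. The walk on $a$ started at $x$ is the deterministic sequence with $X_0=x$ and $X_n=X_{n-1}+1$ if $a(X_{n-1},k)=1$, $X_n=X_{n-1}-1$ if $a(X_{n-1},k)=0$, where $k=\#\{j\le n-1:X_j=X_{n-1}\}$. For $m\in\mathbb Z$, $T_m=\inf\{t\ge0:X_t=m\}$. A sequence $b\in\{0,1\}^{\mathbb N}$ is non-degenerate if $b(i)\ne b(i+1)$ for infinitely many $i$; $a$ is non-degenerate if every $a(x,\cdot)$ is. For non-degenerate $b$: $U^+_b(0)=0$ and for $x\ge1$, $U^+_b(x)$ is the number of indices $i$ with $b(i)=1$ that precede the $x$-th index $j$ with $b(j)=0$; $U^-_b(x)$ is defined the same way with the roles of $0$ and $1$ exchanged. For non-degenerate $a$ and $y\in\mathbb Z_+$, the processes with initial value $y$ are $Z^+_0=y$, $Z^+_n=U^+_{a(n-1,\cdot)}(Z^+_{n-1})$ and $Z^-_0=y$, $Z^-_n=U^-_{a(1-n,\cdot)}(Z^-_{n-1})$ for $n\ge1$. *)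

theory Defs
  imports Main "HOL-Library.Infinite_Set"
begin

text \<open>Arrow environments: a :: int => nat => bool, where a x k (k >= 1) is the k-th
arrow at site x; True encodes 1 (step right), False encodes 0 (step left).
The value at k = 0 is irrelevant (indices start at 1).\<close>

type_synonym arrow_env = "int \<Rightarrow> nat \<Rightarrow> bool"

primrec walk_hist :: "arrow_env \<Rightarrow> int \<Rightarrow> nat \<Rightarrow> int list" where
  "walk_hist a x 0 = [x]"
| "walk_hist a x (Suc n) =
     (let h = walk_hist a x n; y = last h; k = count_list h y
      in h @ [if a y k then y + 1 else y - 1])"

definition walk :: "arrow_env \<Rightarrow> int \<Rightarrow> nat \<Rightarrow> int" where
  "walk a x n = last (walk_hist a x n)"

definition nondeg_seq :: "(nat \<Rightarrow> bool) \<Rightarrow> bool" where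
  "nondeg_seq b \<longleftrightarrow> infinite {i. 1 \<le> i \<and> b i \<noteq> b (Suc i)}"

definition nondeg_env :: "arrow_env \<Rightarrow> bool" where
  "nondeg_env a \<longleftrightarrow> (\<forall>x. nondeg_seq (a x))"

definition nth_index :: "(nat \<Rightarrow> bool) \<Rightarrow> bool \<Rightarrow> nat \<Rightarrow> nat" where
  "nth_index b v x = enumerate {j. 1 \<le> j \<and> b j = v} (x - 1)"

definition Uplus :: "(nat \<Rightarrow> bool) \<Rightarrow> nat \<Rightarrow> nat" where
  "Uplus b x = (if x = 0 then 0
                else card {i. 1 \<le> i \<and> i < nth_index b False x \<and> b i})"

definition Uminus :: "(nat \<Rightarrow> bool) \<Rightarrow> nat \<Rightarrow> nat" where
  "Uminus b x = (if x = 0 then 0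
                 else card {i. 1 \<le> i \<and> i < nth_index b True x \<and> \<not> b i})"

primrec Zplus :: "arrow_env \<Rightarrow> nat \<Rightarrow> nat \<Rightarrow> nat" where
  "Zplus a y 0 = y"
| "Zplus a y (Suc n) = Uplus (a (int (Suc n) - 1)) (Zplus a y n)"

primrec Zminus :: "arrow_env \<Rightarrow> nat \<Rightarrow> nat \<Rightarrow> nat" where
  "Zminus a y 0 = y"
| "Zminus a y (Suc n) = Uminus (a (1 - int (Suc n))) (Zminus a y n)"

end

theory Submission imports Defs begin

lemma count_map_upt: "count_list (map f [0..<n]) y = card {j. j < n \<and> f j = y}"
proof (induction n)
  case 0 then show ?case by simp
next
  case (Suc n)
  have "{j. j < Suc n \<and> f j = y} = {j. j < n \<and> f j = y} \<union> (if f n = y then {n} else {})"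
    by (auto simp: less_Suc_eq)
  then show ?case using Suc by (auto simp: card_insert_if)
qed

lemma walk_hist_map: "walk_hist a x t = map (walk a x) [0..<Suc t]"
proof (induction t)
  case 0 then show ?case by (simp add: walk_def)
next
  case (Suc t)
  have h: "walk_hist a x (Suc t) = walk_hist a x t @ [walk a x (Suc t)]"
    unfolding walk_def by (simp add: Let_def)
  show ?case unfolding h Suc.IH by simp
qed

definition vis :: "arrow_env \<Rightarrow> nat \<Rightarrow> int \<Rightarrow> nat" where
  "vis a t x = card {j. j < t \<and> walk a 0 j = x}"

lemma walk0: "walk a 0 0 = 0" by (simp add: walk_def)

lemma walk_Suc: "walk a 0 (Suc t) = (if a (walk a 0 t) (Suc (vis a t (walk a 0 t))) then walk a 0 t + 1 else walk a 0 t - 1)"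
proof -
  have "count_list (walk_hist a 0 t) (walk a 0 t) = Suc (vis a t (walk a 0 t))"
    unfolding walk_hist_map count_map_upt vis_def
  proof -
    have "{j. j < Suc t \<and> walk a 0 j = walk a 0 t} = insert t {j. j < t \<and> walk a 0 j = walk a 0 t}" by auto
    then show "card {j. j < Suc t \<and> walk a 0 j = walk a 0 t} = Suc (card {j. j < t \<and> walk a 0 j = walk a 0 t})" by simp
  qed
  moreover have "last (walk_hist a 0 t) = walk a 0 t" by (simp add: walk_def)
  moreover have "walk a 0 (Suc t) = (if a (last (walk_hist a 0 t)) (count_list (walk_hist a 0 t) (last (walk_hist a 0 t))) then last (walk_hist a 0 t) + 1 else last (walk_hist a 0 t) - 1)"
    unfolding walk_def by (simp add: Let_def)
  ultimately show ?thesis by simp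
qed

lemma vis_Suc: "vis a (Suc t) x = vis a t x + (if walk a 0 t = x then 1 else 0)"
proof -
  have "{j. j < Suc t \<and> walk a 0 j = x} = {j. j < t \<and> walk a 0 j = x} \<union> (if walk a 0 t = x then {t} else {})"
    by (auto simp: less_Suc_eq)
  then show ?thesis by (auto simp: vis_def card_insert_if)
qed

lemma vis0[simp]: "vis a 0 x = 0" by (simp add: vis_def)

definition cnt :: "(nat \<Rightarrow> bool) \<Rightarrow> bool \<Rightarrow> nat \<Rightarrow> nat" where
  "cnt b v m = card {k. 1 \<le> k \<and> k \<le> m \<and> b k = v}"

lemma cnt0[simp]: "cnt b v 0 = 0" by (simp add: cnt_def)

lemma cnt_Suc: "cnt b v (Suc m) = cnt b v m + (if b (Suc m) = v then 1 else 0)"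
proof -
  have "{k. 1 \<le> k \<and> k \<le> Suc m \<and> b k = v} = {k. 1 \<le> k \<and> k \<le> m \<and> b k = v} \<union> (if b (Suc m) = v then {Suc m} else {})"
    by (auto simp: le_Suc_eq)
  moreover have "finite {k. 1 \<le> k \<and> k \<le> m \<and> b k = v}" by (rule finite_subset[of _ "{..m}"]) auto
  ultimately show ?thesis by (auto simp: cnt_def card_insert_if)
qed



lemma cnt_Suc_eq: "b (Suc m) = v \<Longrightarrow> cnt b v (Suc m) = Suc (cnt b v m)"
  by (simp add: cnt_Suc)

lemma cnt_Suc_neq: "b (Suc m) \<noteq> v \<Longrightarrow> cnt b v (Suc m) = cnt b v m"
  by (simp add: cnt_Suc)

lemma edge:
  "int (cnt (a x) True (vis a t x)) - int (cnt (a (x+1)) False (vis a t (x+1)))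
     = (if 0 \<le> x \<and> x < walk a 0 t then 1 else if walk a 0 t \<le> x \<and> x < 0 then -1 else 0)"
proof (induction t arbitrary: x)
  case 0 show ?case by (simp add: walk0)
next
  case (Suc t)
  define y where "y = walk a 0 t"
  define v where "v = vis a t y"
  have vy: "vis a (Suc t) y = Suc v" using vis_Suc[of a t y] y_def v_def by simp
  have vz: "\<And>z. z \<noteq> y \<Longrightarrow> vis a (Suc t) z = vis a t z"
    using vis_Suc[of a t] y_def by simp
  have IH: "int (cnt (a x) True (vis a t x)) - int (cnt (a (x+1)) False (vis a t (x+1)))
     = (if 0 \<le> x \<and> x < y then 1 else if y \<le> x \<and> x < 0 then -1 else 0)"
    using Suc.IH y_def by simp
  show ?case
  proof (cases "a y (Suc v)")
    case True
    then have X: "walk a 0 (Suc t) = y + 1" using walk_Suc[of a t] y_def v_def by simp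
    show ?thesis
    proof (cases "x = y")
      case True
      have "cnt (a x) True (vis a (Suc t) x) = Suc (cnt (a x) True (vis a t x))"
        using True vy v_def cnt_Suc_eq[of "a y" v True] \<open>a y (Suc v)\<close> by simp
      moreover have "vis a (Suc t) (x+1) = vis a t (x+1)" using vz True by simp
      ultimately show ?thesis using IH X True by auto
    next
      case False
      have e1: "vis a (Suc t) x = vis a t x" using vz False by simp
      show ?thesis
      proof (cases "x + 1 = y")
        case True
        have "cnt (a (x+1)) False (vis a (Suc t) (x+1)) = cnt (a (x+1)) False (vis a t (x+1))"
          using True vy v_def cnt_Suc_neq[of "a y" v False] \<open>a y (Suc v)\<close> by simp
        then show ?thesis using IH X True e1 by auto
      next
        case False
        then have "vis a (Suc t) (x+1) = vis a t (x+1)" using vz by simp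
        then show ?thesis using IH X False e1 \<open>x \<noteq> y\<close> by auto
      qed
    qed
  next
    case False
    then have X: "walk a 0 (Suc t) = y - 1" using walk_Suc[of a t] y_def v_def by simp
    show ?thesis
    proof (cases "x = y")
      case True
      have "cnt (a x) True (vis a (Suc t) x) = cnt (a x) True (vis a t x)"
        using True vy v_def cnt_Suc_neq[of "a y" v True] \<open>\<not> a y (Suc v)\<close> by simp
      moreover have "vis a (Suc t) (x+1) = vis a t (x+1)" using vz True by simp
      ultimately show ?thesis using IH X True by auto
    next
      case False
      have e1: "vis a (Suc t) x = vis a t x" using vz False by simp
      show ?thesis
      proof (cases "x + 1 = y")
        case True
        have "cnt (a (x+1)) False (vis a (Suc t) (x+1)) = Suc (cnt (a (x+1)) False (vis a t (x+1)))"
          using True vy v_def cnt_Suc_eq[of "a y" v False] \<open>\<not> a y (Suc v)\<close> by simp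
        then show ?thesis using IH X True e1 by auto
      next
        case False
        then have "vis a (Suc t) (x+1) = vis a t (x+1)" using vz by simp
        then show ?thesis using IH X False e1 \<open>x \<noteq> y\<close> by auto
      qed
    qed
  qed
qed

lemma enum_below:
  assumes "infinite (S::nat set)"
  shows "{s\<in>S. s < enumerate S n} = enumerate S ` {..<n}"
proof
  show "{s \<in> S. s < enumerate S n} \<subseteq> enumerate S ` {..<n}"
  proof
    fix s assume "s \<in> {s \<in> S. s < enumerate S n}"
    then have s: "s \<in> S" "s < enumerate S n" by auto
    obtain k where k: "enumerate S k = s" using enumerate_Ex[OF assms s(1)] by blast
    then have "k < n" using s(2) enumerate_mono_iff[OF assms] by blast
    then show "s \<in> enumerate S ` {..<n}" using k by auto
  qed
  show "enumerate S ` {..<n} \<subseteq> {s \<in> S. s < enumerate S n}"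
    using assms enumerate_in_set[OF assms] by auto
qed

lemma enum_card:
  assumes "infinite (S::nat set)"
  shows "card {s\<in>S. s < enumerate S n} = n"
proof -
  have "inj_on (enumerate S) {..<n}" using inj_enumerate[OF assms] by (simp add: inj_on_def inj_def)
  then show ?thesis unfolding enum_below[OF assms] by (simp add: card_image)
qed

lemma nondeg_inf:
  assumes "nondeg_seq b"
  shows "infinite {j. 1 \<le> j \<and> b j = v}"
proof
  assume fin: "finite {j. 1 \<le> j \<and> b j = v}"
  then obtain N where N: "\<And>j. j \<in> {j. 1 \<le> j \<and> b j = v} \<Longrightarrow> j < N"
    using finite_nat_bounded[OF fin] by (auto simp: subset_iff)
  have "{i. 1 \<le> i \<and> b i \<noteq> b (Suc i)} \<subseteq> {..<N}"
  proof
    fix i assume i: "i \<in> {i. 1 \<le> i \<and> b i \<noteq> b (Suc i)}"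
    show "i \<in> {..<N}"
    proof (rule ccontr)
      assume "i \<notin> {..<N}"
      then have "b i \<noteq> v" "b (Suc i) \<noteq> v" using N[of i] N[of "Suc i"] i by auto
      then show False using i by auto
    qed
  qed
  then have "finite {i. 1 \<le> i \<and> b i \<noteq> b (Suc i)}" by (rule finite_subset) simp
  then show False using assms by (simp add: nondeg_seq_def)
qed

lemma cnt_finite: "finite {k::nat. 1 \<le> k \<and> k \<le> m \<and> P k}"
proof -
  have "{k. 1 \<le> k \<and> k \<le> m \<and> P k} \<subseteq> {..m}" by auto
  then show ?thesis by (rule finite_subset) simp
qed

lemma F1:
  assumes inf: "infinite {j. 1 \<le> j \<and> b j = False}" and m: "1 \<le> m" "\<not> b m"
  shows "Uplus b (cnt b False m) = cnt b True m"
proof -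
  define S where "S = {j. 1 \<le> j \<and> b j = False}"
  have inf': "infinite S" using inf S_def by simp
  have mS: "m \<in> S" using m S_def by simp
  obtain k where k: "enumerate S k = m" using enumerate_Ex[OF inf' mS] by blast
  have ck: "card {s\<in>S. s < m} = k" using enum_card[OF inf', of k] k by simp
  have "{k. 1 \<le> k \<and> k \<le> m \<and> b k = False} = insert m {s\<in>S. s < m}"
    using m by (auto simp: S_def)
  moreover have "finite {s\<in>S. s < m}" by simp
  ultimately have c: "cnt b False m = Suc k" using ck by (simp add: cnt_def)
  have ni: "nth_index b False (Suc k) = m" using k by (simp add: nth_index_def S_def)
  have "{i. 1 \<le> i \<and> i < m \<and> b i} = {k. 1 \<le> k \<and> k \<le> m \<and> b k = True}"
    using m by (auto simp: le_less)
  then show ?thesis using c ni by (simp add: Uplus_def cnt_def)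
qed

lemma F2:
  assumes inf: "infinite {j. 1 \<le> j \<and> b j = False}" and lt: "cnt b False m < n"
  shows "cnt b True m \<le> Uplus b n"
proof -
  define S where "S = {j. 1 \<le> j \<and> b j = False}"
  have inf': "infinite S" using inf S_def by simp
  have n: "n \<noteq> 0" using lt by simp
  define J where "J = enumerate S (n - 1)"
  have JS: "J \<in> S" using enumerate_in_set[OF inf'] J_def by simp
  have cJ: "card {s\<in>S. s < J} = n - 1" using enum_card[OF inf'] J_def by simp
  have mJ: "m < J"
  proof (rule ccontr)
    assume "\<not> m < J"
    then have "insert J {s\<in>S. s < J} \<subseteq> {k. 1 \<le> k \<and> k \<le> m \<and> b k = False}"
      using JS by (auto simp: S_def)
    then have "card (insert J {s\<in>S. s < J}) \<le> cnt b False m"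
      unfolding cnt_def by (rule card_mono[OF cnt_finite])
    then show False using cJ n lt by simp
  qed
  have "{k. 1 \<le> k \<and> k \<le> m \<and> b k = True} \<subseteq> {i. 1 \<le> i \<and> i < nth_index b False n \<and> b i}"
    using mJ by (auto simp: nth_index_def J_def S_def)
  then have "cnt b True m \<le> card {i. 1 \<le> i \<and> i < nth_index b False n \<and> b i}"
    unfolding cnt_def by (rule card_mono[rotated]) (rule finite_subset[of _ "{..<nth_index b False n}"], auto)
  then show ?thesis using n by (simp add: Uplus_def)
qed


lemma step_cases: "walk a 0 (Suc t) = walk a 0 t + 1 \<or> walk a 0 (Suc t) = walk a 0 t - 1"
  using walk_Suc[of a t] by (auto split: if_splits)

lemma walk_le: "walk a 0 t \<le> int t"
proof (induction t)
  case 0 then show ?case by (simp add: walk0)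
next
  case (Suc t) then show ?case using step_cases[of a t] by auto
qed

lemma nonneg_upto:
  assumes "\<forall>i<t. walk a 0 i \<noteq> -1" "j < t"
  shows "walk a 0 j \<ge> 0"
  using assms(2)
proof (induction j)
  case 0 then show ?case by (simp add: walk0)
next
  case (Suc j)
  then have "walk a 0 j \<ge> 0" by simp
  moreover have "walk a 0 (Suc j) \<noteq> -1" using assms(1) Suc.prems by blast
  ultimately show ?case using step_cases[of a j] by auto
qed

lemma nonneg:
  assumes "\<forall>i. walk a 0 i \<noteq> -1"
  shows "walk a 0 j \<ge> 0"
  using nonneg_upto[of "Suc j" a j] assms by simp

lemma ivt:
  assumes "walk a 0 (i + d) \<le> y" "y \<le> walk a 0 i"
  shows "\<exists>k. i \<le> k \<and> k \<le> i + d \<and> walk a 0 k = y"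
  using assms(1)
proof (induction d)
  case 0 then show ?case using assms(2) by (intro exI[of _ i]) auto
next
  case (Suc d)
  show ?case
  proof (cases "walk a 0 (i + d) \<le> y")
    case True
    then obtain k where "i \<le> k \<and> k \<le> i + d \<and> walk a 0 k = y" using Suc.IH by blast
    then show ?thesis by (intro exI[of _ k]) auto
  next
    case False
    then have "walk a 0 (i + Suc d) = y"
      using Suc.prems step_cases[of a "i + d"] by auto
    then show ?thesis by (intro exI[of _ "i + Suc d"]) auto
  qed
qed

lemma vis_zero: "(\<And>j. j < t \<Longrightarrow> walk a 0 j \<noteq> x) \<Longrightarrow> vis a t x = 0"
  unfolding vis_def by auto

lemma inf_visit_down:
  assumes nd: "nondeg_env a" and inf: "infinite {t. walk a 0 t = x}"
  shows "infinite {t. walk a 0 t = x - 1}"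
proof
  assume fin: "finite {t. walk a 0 t = x - 1}"
  define V where "V = {t. walk a 0 t = x}"
  define Z where "Z = {k. 1 \<le> k \<and> a x k = False}"
  have infV: "infinite V" using inf V_def by simp
  have infZ: "infinite Z" using nondeg_inf[of "a x" False] nd by (simp add: nondeg_env_def Z_def)
  define g where "g k = Suc (enumerate V (k - 1))" for k
  have sub: "g ` Z \<subseteq> {t. walk a 0 t = x - 1}"
  proof
    fix u assume "u \<in> g ` Z"
    then obtain k where k: "k \<in> Z" "u = g k" by blast
    define tk where "tk = enumerate V (k - 1)"
    have X: "walk a 0 tk = x" using enumerate_in_set[OF infV] tk_def V_def by auto
    have "{j. j < tk \<and> walk a 0 j = x} = {s\<in>V. s < tk}" by (auto simp: V_def)
    then have "vis a tk x = k - 1" using enum_card[OF infV, of "k - 1"] tk_def by (simp add: vis_def)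
    then have "Suc (vis a tk x) = k" using k Z_def by auto
    then have "walk a 0 (Suc tk) = x - 1" using walk_Suc[of a tk] X k Z_def by simp
    then show "u \<in> {t. walk a 0 t = x - 1}" using k g_def tk_def by simp
  qed
  have "inj_on g Z"
  proof
    fix k1 k2 assume "k1 \<in> Z" "k2 \<in> Z" "g k1 = g k2"
    then have "enumerate V (k1 - 1) = enumerate V (k2 - 1)" "k1 \<ge> 1" "k2 \<ge> 1" by (auto simp: g_def Z_def)
    then show "k1 = k2" using inj_enumerate[OF infV] unfolding inj_def by (metis le_add_diff_inverse2)
  qed
  moreover have "finite (g ` Z)" using fin sub finite_subset by blast
  ultimately show False using infZ finite_imageD by blast
qed

lemma unbounded:
  assumes nd: "nondeg_env a" and nv: "\<forall>t. walk a 0 t \<noteq> -1"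
  shows "\<exists>t. walk a 0 t > int n"
proof (rule ccontr)
  assume "\<not> ?thesis"
  then have up: "\<And>t. walk a 0 t \<le> int n" by (simp add: not_less)
  have eq: "UNIV = (\<Union>x\<in>{0..int n}. {t. walk a 0 t = x})"
  proof (intro set_eqI iffI)
    fix t :: nat
    have "walk a 0 t \<in> {0..int n}" using up[of t] nonneg[OF nv, of t] by simp
    then show "t \<in> (\<Union>x\<in>{0..int n}. {t. walk a 0 t = x})" by blast
  qed simp
  have "\<exists>x\<in>{0..int n}. infinite {t. walk a 0 t = x}"
  proof (rule ccontr)
    assume "\<not> ?thesis"
    then have "\<forall>x\<in>{0..int n}. finite {t. walk a 0 t = x}" by blast
    then have "finite (\<Union>x\<in>{0..int n}. {t. walk a 0 t = x})" by (intro finite_UN_I) auto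
    then show False using eq infinite_UNIV_nat by simp
  qed
  then obtain x where x: "x \<in> {0..int n}" "infinite {t. walk a 0 t = x}" by blast
  have "\<And>d. infinite {t. walk a 0 t = x - int d}"
  proof -
    fix d show "infinite {t. walk a 0 t = x - int d}"
    proof (induction d)
      case 0 then show ?case using x by simp
    next
      case (Suc d)
      then have "infinite {t. walk a 0 t = x - int d - 1}" using inf_visit_down[OF nd] by blast
      then show ?case by (simp add: algebra_simps)
    qed
  qed
  from this[of "nat (x + 1)"] have "infinite {t. walk a 0 t = -1}" using x by simp
  then obtain t where "walk a 0 t = -1" using not_finite_existsD by blast
  then show False using nv by blast
qed


lemma dirA:
  assumes nd: "nondeg_env a" and nv: "\<forall>t. walk a 0 t \<noteq> -1"
  shows "Zplus a 1 n \<noteq> 0"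
proof -
  obtain t where t: "walk a 0 t > int n" using unbounded[OF nd nv] by blast
  have nv0: "vis a t (-1) = 0" using nv by (intro vis_zero) auto
  have key: "int m \<le> walk a 0 t \<longrightarrow> cnt (a (int m)) False (vis a t (int m)) < Zplus a 1 m" for m
  proof (induction m)
    case 0
    have "int (cnt (a (-1)) True (vis a t (-1))) - int (cnt (a (-1+1)) False (vis a t (-1+1))) = 0"
      using edge[of a "-1" t] nonneg[OF nv, of t] by simp
    then have "cnt (a 0) False (vis a t 0) = 0" using nv0 by simp
    then show ?case by simp
  next
    case (Suc m)
    show ?case
    proof
      assume le: "int (Suc m) \<le> walk a 0 t"
      then have lt: "cnt (a (int m)) False (vis a t (int m)) < Zplus a 1 m" using Suc.IH by simp
      have inf: "infinite {j. 1 \<le> j \<and> a (int m) j = False}"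
        using nondeg_inf[of "a (int m)" False] nd by (simp add: nondeg_env_def)
      have "cnt (a (int m)) True (vis a t (int m)) \<le> Uplus (a (int m)) (Zplus a 1 m)"
        using F2[OF inf lt] .
      moreover have "int (cnt (a (int m)) True (vis a t (int m))) - int (cnt (a (int m + 1)) False (vis a t (int m + 1))) = 1"
        using edge[of a "int m" t] le by simp
      ultimately show "cnt (a (int (Suc m))) False (vis a t (int (Suc m))) < Zplus a 1 (Suc m)"
        by (simp add: add.commute)
    qed
  qed
  from this[of n] t show ?thesis by simp
qed

lemma dirB:
  assumes nd: "nondeg_env a" and hit: "walk a 0 t0 = -1"
  shows "\<exists>n. Zplus a 1 n = 0"
proof -
  define t where "t = (LEAST t. walk a 0 t = -1)"
  have Xt: "walk a 0 t = -1" using LeastI[of "\<lambda>t. walk a 0 t = -1" t0] hit t_def by simp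
  have before: "\<And>i. i < t \<Longrightarrow> walk a 0 i \<noteq> -1" using not_less_Least t_def by blast
  have nv0: "vis a t (-1) = 0" using before by (intro vis_zero) auto
  have lastleft: "\<not> a m (vis a t m)" if m0: "0 \<le> m" and vp: "vis a t m > 0" for m
  proof -
    define W where "W = {j. j < t \<and> walk a 0 j = m}"
    have finW: "finite W" by (simp add: W_def)
    have neW: "W \<noteq> {}" using vp by (auto simp: vis_def W_def card_gt_0_iff)
    define s where "s = Max W"
    have sW: "s \<in> W" using Max_in finW neW s_def by blast
    have smax: "\<And>j. j \<in> W \<Longrightarrow> j \<le> s" using Max_ge finW s_def by blast
    have Xs: "walk a 0 s = m" and st: "s < t" using sW by (auto simp: W_def)
    have "W = insert s {j. j < s \<and> walk a 0 j = m}"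
      using sW smax st by (auto simp: W_def le_less)
    then have vv: "vis a t m = Suc (vis a s m)"
      by (simp add: vis_def W_def[symmetric])
    show ?thesis
    proof
      assume A: "a m (vis a t m)"
      then have S: "walk a 0 (Suc s) = m + 1" using walk_Suc[of a s] Xs vv by simp
      have tt: "Suc s + (t - Suc s) = t" using st by simp
      obtain k where k: "Suc s \<le> k" "k \<le> t" "walk a 0 k = m"
        using ivt[of a "Suc s" "t - Suc s" m] Xt m0 S tt by auto
      have "k \<noteq> t" using k Xt m0 by auto
      then have "k \<in> W" using k by (auto simp: W_def)
      then show False using smax k by fastforce
    qed
  qed
  have key: "Zplus a 1 m = cnt (a (int m)) False (vis a t (int m))" for m
  proof (induction m)
    case 0
    have "int (cnt (a (-1)) True (vis a t (-1))) - int (cnt (a (-1+1)) False (vis a t (-1+1))) = -1"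
      using edge[of a "-1" t] Xt by simp
    then show ?case using nv0 by simp
  next
    case (Suc m)
    define b where "b = a (int m)"
    define v where "v = vis a t (int m)"
    have inf: "infinite {j. 1 \<le> j \<and> b j = False}"
      using nondeg_inf[of b False] nd by (simp add: nondeg_env_def b_def)
    have U: "Uplus b (cnt b False v) = cnt b True v"
    proof (cases "v = 0")
      case True then show ?thesis by (simp add: Uplus_def)
    next
      case False then show ?thesis using F1[OF inf, of v] lastleft[of "int m"] b_def v_def by simp
    qed
    have "int (cnt b True v) - int (cnt (a (int m + 1)) False (vis a t (int m + 1))) = 0"
      using edge[of a "int m" t] Xt b_def v_def by simp
    then show ?case using Suc.IH U b_def v_def by (simp add: add.commute)
  qed
  have "vis a t (int t) = 0"
  proof (rule vis_zero)
    fix j assume "j < t"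
    then show "walk a 0 j \<noteq> int t" using walk_le[of a j] by simp
  qed
  then show ?thesis using key[of t] by auto
qed

definition refl_env :: "arrow_env \<Rightarrow> arrow_env" where
  "refl_env a x k = (\<not> a (-x) k)"

lemma walk_refl: "walk (refl_env a) 0 t = - walk a 0 t"
proof (induction t rule: less_induct)
  case (less t)
  show ?case
  proof (cases t)
    case 0 then show ?thesis by (simp add: walk0)
  next
    case (Suc u)
    have IH: "\<And>j. j \<le> u \<Longrightarrow> walk (refl_env a) 0 j = - walk a 0 j" using less Suc by simp
    have "{j. j < u \<and> walk (refl_env a) 0 j = walk (refl_env a) 0 u} = {j. j < u \<and> walk a 0 j = walk a 0 u}"
      using IH by auto
    then have v: "vis (refl_env a) u (walk (refl_env a) 0 u) = vis a u (walk a 0 u)"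
      by (simp add: vis_def)
    have r: "\<And>k. refl_env a (- walk a 0 u) k = (\<not> a (walk a 0 u) k)" by (simp add: refl_env_def)
    show ?thesis using walk_Suc[of "refl_env a" u] walk_Suc[of a u] v IH[of u] Suc r
      by simp
  qed
qed

lemma Uplus_neg: "Uplus (\<lambda>k. \<not> b k) z = Uminus b z"
  by (simp add: Uplus_def Uminus_def nth_index_def)

lemma Zplus_refl: "Zplus (refl_env a) y n = Zminus a y n"
  by (induction n) (simp_all add: refl_env_def Uplus_neg[symmetric] algebra_simps)

lemma nondeg_refl: "nondeg_env a \<Longrightarrow> nondeg_env (refl_env a)"
  by (simp add: nondeg_env_def nondeg_seq_def refl_env_def)

lemma part1:
  assumes nd: "nondeg_env a"
  shows "(\<exists>t. walk a 0 t = -1) \<longleftrightarrow> (\<exists>n. Zplus a 1 n = 0)"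
  using dirA[OF nd] dirB[OF nd] by blast

theorem theorem2p4:
  fixes a :: arrow_env
  assumes "nondeg_env a"
  shows "((\<exists>t. walk a 0 t = -1) \<longleftrightarrow> (\<exists>n. Zplus a 1 n = 0))
       \<and> ((\<exists>t. walk a 0 t = 1) \<longleftrightarrow> (\<exists>n. Zminus a 1 n = 0))"
proof
  show "(\<exists>t. walk a 0 t = -1) \<longleftrightarrow> (\<exists>n. Zplus a 1 n = 0)" using part1[OF assms] .
  have "(\<exists>t. walk a 0 t = 1) \<longleftrightarrow> (\<exists>t. walk (refl_env a) 0 t = -1)"
    by (simp add: walk_refl minus_equation_iff)
  also have "\<dots> \<longleftrightarrow> (\<exists>n. Zplus (refl_env a) 1 n = 0)" using part1[OF nondeg_refl[OF assms]] .
  finally show "(\<exists>t. walk a 0 t = 1) \<longleftrightarrow> (\<exists>n. Zminus a 1 n = 0)" by (simp add: Zplus_refl)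
qed

end
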